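(* Let $(\{\boldsymbol\beta^i\}_{i\in I},\{\eta^{i<j}\}_{i<j\in I},z)$ be an $I$-filtered chain complex of attaching circles in $(\Sigma,z)$, and let $\boldsymbol\alpha$ be a further complete set of attaching circles such that for every sequence $i_1<\dots<i_n$ in $I$ the multi-diagram $(\Sigma,\boldsymbol\alpha,\boldsymbol\beta^{i_1},\dots,\boldsymbol\beta^{i_n},z)$ is weakly admissible. For $i<j$ define $D^{i<j}:\widehat{CF}(\boldsymbol\alpha,\boldsymbol\beta^i,z)\to\widehat{CF}(\boldsymbol\alpha,\boldsymbol\beta^j,z)$ by $$D^{i<j}(\mathbf x)=\sum_{i=i_1<\dots<i_n=j} m_n(\eta^{i_{n-1}<i_n},\dots,\eta^{i_1<i_2},\mathbf x).$$ Then $\{\widehat{CF}(\boldsymbol\alpha,\boldsymbol\beta^i,z)\}_{i\in I}$ together with the maps $D^{i<j}$ is an $I$-filtered chain complex, i.e. for all $i<k$, $d(D^{i<k})=\sum_{i<j<k}D^{j<k}\circ D^{i<j}$, where $d$ is the differential on the morphism complex. Its associated graded complex is $\bigoplus_{i\in I}\widehat{CF}(\boldsymbol\alpha,\boldsymbol\beta^i,z)$.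
   Context: Work over $\mathbb F_2$. Let $(\Sigma,z)$ be a closed oriented surface of genus $g$ with basepoint $z$. A complete set of attaching circles is a $g$-tuple of pairwise disjoint, homologically independent embedded circles in $\Sigma\setminus\{z\}$. For complete sets $\boldsymbol\beta^a,\boldsymbol\beta^b$, $\widehat{CF}(\boldsymbol\beta^a,\boldsymbol\beta^b,z)$ is the $\mathbb F_2$-vector space generated by $T_{\boldsymbol\beta^a}\cap T_{\boldsymbol\beta^b}\subset\mathrm{Sym}^g(\Sigma\setminus z)$, where $T_{\boldsymbol\beta}$ is the torus $\beta_1\times\dots\times\beta_g$. For a weakly admissible multi-diagram $(\Sigma,\boldsymbol\beta^0,\dots,\boldsymbol\beta^n,z)$ and a generic admissible family of almost-complex structures, $m_n:\widehat{CF}(\boldsymbol\beta^{n-1},\boldsymbol\beta^n,z)\otimes\dots\otimes\widehat{CF}(\boldsymbol\beta^0,\boldsymbol\beta^1,z)\to\widehat{CF}(\boldsymbol\beta^0,\boldsymbol\beta^n,z)$ counts rigid (expected dimension $0$) embedded holomorphic $(n+1)$-gons with multiplicity $0$ at $z$ (note the order of the inputs); $m_1$ is the differential, and the $m_n$ satisfy the $A_\infty$ relations. For a finite poset $I$, an $I$-filtered chain complex of attaching circles consists of complete sets $\{\boldsymbol\beta^i\}_{i\in I}$ such that each $(\Sigma,\boldsymbol\beta^{i_1},\dots,\boldsymbol\beta^{i_n},z)$, $i_1<\dots<i_n$, is weakly admissible, together with chains $\eta^{i<j}\in\widehat{CF}(\boldsymbol\beta^i,\boldsymbol\beta^j,z)$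 for $i<j$, satisfying for all $i<j$: $\sum_{n\ge1}\sum_{i=i_0<i_1<\dots<i_n=j}m_n(\eta^{i_{n-1}<i_n},\dots,\eta^{i_0<i_1})=0$. An $I$-filtered chain complex is a collection of chain complexes $C^i$ with degree-zero maps $D^{i<j}\in\mathrm{Mor}(C^i,C^j[1])$ satisfying $d(D^{i<k})=\sum_{i<j<k}D^{j<k}\circ D^{i<j}$; equivalently $\sum_i\partial^i+\sum_{i<j}D^{i<j}$ is a differential on $\bigoplus_iC^i$. *)

theory Defs
  imports Main "HOL-Library.Z2" "HOL-Library.Function_Algebras"
begin

text \<open>Chains over F2: functions from generators (intersection points) to bit
  with support in the given generating set.  Objects of type 'o stand for
  complete sets of attaching circles; gens a b is the finite set of generators
  of CF-hat(a,b,z).\<close>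

definition CF :: "('o \<Rightarrow> 'o \<Rightarrow> 'g set) \<Rightarrow> 'o \<Rightarrow> 'o \<Rightarrow> ('g \<Rightarrow> bit) set" where
  "CF gens a b = {x. \<forall>g. x g \<noteq> 0 \<longrightarrow> g \<in> gens a b}"

text \<open>The paper's m_n(x_n,...,x_1) is written here m os [x_1,...,x_n].\<close>

definition composable :: "('o \<Rightarrow> 'o \<Rightarrow> 'g set) \<Rightarrow> 'o list \<Rightarrow> ('g \<Rightarrow> bit) list \<Rightarrow> bool" where
  "composable gens os xs \<longleftrightarrow> xs \<noteq> [] \<and> length os = Suc (length xs) \<and>
     (\<forall>k < length xs. xs ! k \<in> CF gens (os ! k) (os ! Suc k))"

text \<open>Left-hand side of the A-infinity relation (over F2):
  sum over 0 <= p < q <= n of m(x_1..x_p, m(x_(p+1)..x_q), x_(q+1)..x_n).\<close>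

definition ainf_sum :: "('o list \<Rightarrow> ('g \<Rightarrow> bit) list \<Rightarrow> ('g \<Rightarrow> bit)) \<Rightarrow> 'o list \<Rightarrow> ('g \<Rightarrow> bit) list \<Rightarrow> ('g \<Rightarrow> bit)" where
  "ainf_sum m os xs = (\<Sum>(p, q) \<in> {(p, q). p < q \<and> q \<le> length xs}.
      m (take (Suc p) os @ drop q os)
        (take p xs @ [m (take (Suc (q - p)) (drop p os)) (take (q - p) (drop p xs))] @ drop q xs))"

text \<open>Abstract holomorphic polygon maps: adm is weak admissibility of a
  multi-diagram (Sigma, os, z); m os xs is the polygon count m_n.\<close>

definition polygon_maps :: "('o \<Rightarrow> 'o \<Rightarrow> 'g set) \<Rightarrow> ('o list \<Rightarrow> bool) \<Rightarrow>
    ('o list \<Rightarrow> ('g \<Rightarrow> bit) list \<Rightarrow> ('g \<Rightarrow> bit)) \<Rightarrow> bool" where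
  "polygon_maps gens adm m \<longleftrightarrow>
     (\<forall>a b. finite (gens a b)) \<and>
     (\<forall>os os'. adm os \<longrightarrow> os' \<in> set (subseqs os) \<longrightarrow> 2 \<le> length os' \<longrightarrow> adm os') \<and>
     (\<forall>os xs. adm os \<longrightarrow> composable gens os xs \<longrightarrow> m os xs \<in> CF gens (hd os) (last os)) \<and>
     (\<forall>os xs k x y. adm os \<longrightarrow> composable gens os xs \<longrightarrow> k < length xs \<longrightarrow>
        x \<in> CF gens (os ! k) (os ! Suc k) \<longrightarrow> y \<in> CF gens (os ! k) (os ! Suc k) \<longrightarrow>
        m os (xs[k := x + y]) = m os (xs[k := x]) + m os (xs[k := y])) \<and>
     (\<forall>os xs. adm os \<longrightarrow> composable gens os xs \<longrightarrow> ainf_sum m os xs = 0)"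

definition chains :: "'i::order \<Rightarrow> 'i \<Rightarrow> 'i list set" where
  "chains i j = {cs. cs \<noteq> [] \<and> sorted_wrt (<) cs \<and> hd cs = i \<and> last cs = j}"

definition etas :: "('i \<Rightarrow> 'i \<Rightarrow> 'c) \<Rightarrow> 'i list \<Rightarrow> 'c list" where
  "etas \<eta> cs = map (\<lambda>k. \<eta> (cs ! k) (cs ! Suc k)) [0..<length cs - 1]"

definition filtered_circles :: "('o \<Rightarrow> 'o \<Rightarrow> 'g set) \<Rightarrow> ('o list \<Rightarrow> bool) \<Rightarrow>
    ('o list \<Rightarrow> ('g \<Rightarrow> bit) list \<Rightarrow> ('g \<Rightarrow> bit)) \<Rightarrow>
    ('i::{order,finite} \<Rightarrow> 'o) \<Rightarrow> ('i \<Rightarrow> 'i \<Rightarrow> ('g \<Rightarrow> bit)) \<Rightarrow> bool" where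
  "filtered_circles gens adm m \<beta> \<eta> \<longleftrightarrow>
     (\<forall>cs. 2 \<le> length cs \<longrightarrow> sorted_wrt (<) cs \<longrightarrow> adm (map \<beta> cs)) \<and>
     (\<forall>i j. i < j \<longrightarrow> \<eta> i j \<in> CF gens (\<beta> i) (\<beta> j)) \<and>
     (\<forall>i j. i < j \<longrightarrow> (\<Sum>cs \<in> chains i j. m (map \<beta> cs) (etas \<eta> cs)) = 0)"

definition Dmap :: "('o list \<Rightarrow> ('g \<Rightarrow> bit) list \<Rightarrow> ('g \<Rightarrow> bit)) \<Rightarrow> 'o \<Rightarrow>
    ('i::{order,finite} \<Rightarrow> 'o) \<Rightarrow> ('i \<Rightarrow> 'i \<Rightarrow> ('g \<Rightarrow> bit)) \<Rightarrow> 'i \<Rightarrow> 'i \<Rightarrow> ('g \<Rightarrow> bit) \<Rightarrow> ('g \<Rightarrow> bit)" where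
  "Dmap m \<alpha> \<beta> \<eta> i j x = (\<Sum>cs \<in> chains i j. m (\<alpha> # map \<beta> cs) (x # etas \<eta> cs))"

end

theory Submission
  imports Defs
begin

lemma bit_self: "(a::bit) + a = 0"
  by (metis add_bit_eq_xor xor_self_eq)

lemma fun_self: "(f::'g \<Rightarrow> bit) + f = 0"
  by (rule ext) (simp add: bit_self)

lemma CF_zero: "0 \<in> CF gens a b" by (simp add: CF_def)

lemma CF_add: "x \<in> CF gens a b \<Longrightarrow> y \<in> CF gens a b \<Longrightarrow> x + y \<in> CF gens a b"
  by (auto simp: CF_def)

lemma CF_sum: "(\<And>s. s \<in> S \<Longrightarrow> f s \<in> CF gens a b) \<Longrightarrow> sum f S \<in> CF gens a b"
  by (induction S rule: infinite_finite_induct) (auto simp: CF_zero CF_add)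

lemma sorted_lt_distinct: "sorted_wrt (<) (xs::'a::order list) \<Longrightarrow> distinct xs"
  by (induction xs) auto

lemma finite_chains: "finite (chains (i::'i::{order,finite}) j)"
proof -
  have "chains i j \<subseteq> {xs. set xs \<subseteq> UNIV \<and> length xs \<le> card (UNIV::'i set)}"
  proof
    fix xs assume "xs \<in> chains i j"
    hence "distinct xs" unfolding chains_def using sorted_lt_distinct by auto
    hence "length xs = card (set xs)" by (simp add: distinct_card)
    also have "\<dots> \<le> card (UNIV::'i set)" by (rule card_mono) auto
    finally show "xs \<in> {xs. set xs \<subseteq> UNIV \<and> length xs \<le> card (UNIV::'i set)}" by simp
  qed
  moreover have "finite {xs::'i list. set xs \<subseteq> UNIV \<and> length xs \<le> card (UNIV::'i set)}"
    by (rule finite_lists_length_le) simp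
  ultimately show ?thesis by (rule finite_subset)
qed

lemma etas_length[simp]: "length (etas \<eta> cs) = length cs - 1"
  by (simp add: etas_def)

lemma etas_nth: "k < length cs - 1 \<Longrightarrow> etas \<eta> cs ! k = \<eta> (cs ! k) (cs ! Suc k)"
  by (simp add: etas_def)

lemma etas_Nil[simp]: "etas \<eta> [] = []" and etas_single[simp]: "etas \<eta> [u] = []"
  by (simp_all add: etas_def)

lemma etas_Cons2[simp]: "etas \<eta> (u # v # r) = \<eta> u v # etas \<eta> (v # r)"
  by (rule nth_equalityI) (auto simp: etas_nth nth_Cons split: nat.splits)

lemma etas_append: "s \<noteq> [] \<Longrightarrow> etas \<eta> (s @ b) = etas \<eta> s @ etas \<eta> (last s # b)"
proof (induction s)
  case Nil thus ?case by simp
next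
  case (Cons u s)
  show ?case
  proof (cases s)
    case Nil thus ?thesis by simp
  next
    case (Cons v r)
    thus ?thesis using Cons.IH by simp
  qed
qed


lemma self_zero: "(a::'g \<Rightarrow> bit) = a + a \<Longrightarrow> a = 0"
  by (metis fun_self)

lemma pm_lin:
  assumes "polygon_maps gens adm m" "adm os" "composable gens os xs" "k < length xs"
    "x \<in> CF gens (os!k) (os!Suc k)" "y \<in> CF gens (os!k) (os!Suc k)"
  shows "m os (xs[k := x + y]) = m os (xs[k := x]) + m os (xs[k := y])"
  using assms unfolding polygon_maps_def by blast

lemma pm_lin_sum:
  assumes pm: "polygon_maps gens adm m" and ad: "adm os" and co: "composable gens os xs"
    and k: "k < length xs" and f: "\<forall>s\<in>S. f s \<in> CF gens (os!k) (os!Suc k)" and fin: "finite S"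
  shows "m os (xs[k := sum f S]) = (\<Sum>s\<in>S. m os (xs[k := f s]))"
proof -
  have lin: "\<And>x y. x \<in> CF gens (os!k) (os!Suc k) \<Longrightarrow> y \<in> CF gens (os!k) (os!Suc k) \<Longrightarrow>
     m os (xs[k := x + y]) = m os (xs[k := x]) + m os (xs[k := y])"
    using pm ad co k unfolding polygon_maps_def by blast
  show ?thesis using fin f
proof (induction S rule: finite_induct)
  case empty
  have "m os (xs[k := 0 + 0]) = m os (xs[k := 0]) + m os (xs[k := 0])"
    by (rule lin) (simp_all add: CF_zero)
  hence "m os (xs[k := 0]) = m os (xs[k := 0]) + m os (xs[k := 0])" by simp
  thus ?case unfolding sum.empty by (rule self_zero)
next
  case (insert a S)
  have "m os (xs[k := f a + sum f S]) = m os (xs[k := f a]) + m os (xs[k := sum f S])"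
    using insert by (intro lin) (auto intro!: CF_sum)
  thus ?case by (simp only: sum.insert[OF insert.hyps] insert.IH[OF conjunct2[OF insert.prems[simplified]]])
qed
qed

lemma fc_eta: "filtered_circles gens adm m \<beta> \<eta> \<Longrightarrow> a < b \<Longrightarrow> \<eta> a b \<in> CF gens (\<beta> a) (\<beta> b)"
  unfolding filtered_circles_def by blast

lemma comp_alpha:
  assumes fc: "filtered_circles gens adm m \<beta> \<eta>" and ne: "cs \<noteq> []" and so: "sorted_wrt (<) cs"
    and x: "x \<in> CF gens \<alpha> (\<beta> (hd cs))"
  shows "composable gens (\<alpha> # map \<beta> cs) (x # etas \<eta> cs)"
  unfolding composable_def
proof (intro conjI allI impI)
  show "length (\<alpha> # map \<beta> cs) = Suc (length (x # etas \<eta> cs))" using ne by simp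
  fix k assume k: "k < length (x # etas \<eta> cs)"
  show "(x # etas \<eta> cs) ! k \<in> CF gens ((\<alpha> # map \<beta> cs) ! k) ((\<alpha> # map \<beta> cs) ! Suc k)"
  proof (cases k)
    case 0 thus ?thesis using x ne by (simp add: hd_conv_nth)
  next
    case (Suc k')
    have k': "k' < length cs - 1" using k Suc by simp
    hence lt: "cs ! k' < cs ! Suc k'" using so by (auto intro: sorted_wrt_nth_less)
    have "(x # etas \<eta> cs) ! k = \<eta> (cs ! k') (cs ! Suc k')" using Suc k' by (simp add: etas_nth)
    moreover have "(\<alpha> # map \<beta> cs) ! k = \<beta> (cs ! k')" "(\<alpha> # map \<beta> cs) ! Suc k = \<beta> (cs ! Suc k')"
      using Suc k' by simp_all
    ultimately show ?thesis using fc_eta[OF fc lt] by simp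
  qed
qed simp

lemma comp_beta:
  assumes fc: "filtered_circles gens adm m \<beta> \<eta>" and l: "2 \<le> length cs" and so: "sorted_wrt (<) cs"
  shows "composable gens (map \<beta> cs) (etas \<eta> cs)"
  unfolding composable_def
proof (intro conjI allI impI)
  show "etas \<eta> cs \<noteq> []"
  proof
    assume "etas \<eta> cs = []"
    hence "length (etas \<eta> cs) = 0" by (simp only: list.size)
    thus False using l by simp
  qed
  show "length (map \<beta> cs) = Suc (length (etas \<eta> cs))" using l by simp
  fix k assume k: "k < length (etas \<eta> cs)"
  hence k': "k < length cs - 1" by simp
  hence lt: "cs ! k < cs ! Suc k" using so by (auto intro: sorted_wrt_nth_less)
  have "etas \<eta> cs ! k = \<eta> (cs ! k) (cs ! Suc k)" using k' by (simp add: etas_nth)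
  moreover have "map \<beta> cs ! k = \<beta> (cs ! k)" "map \<beta> cs ! Suc k = \<beta> (cs ! Suc k)" using k' by simp_all
  ultimately show "etas \<eta> cs ! k \<in> CF gens (map \<beta> cs ! k) (map \<beta> cs ! Suc k)" using fc_eta[OF fc lt] by simp
qed

lemma etas_dec3: "etas \<eta> (a @ u # r @ v # b) = etas \<eta> (a @ [u]) @ etas \<eta> (u # r @ [v]) @ etas \<eta> (v # b)"
proof -
  have "etas \<eta> ((a @ u # r @ [v]) @ b) = etas \<eta> (a @ u # r @ [v]) @ etas \<eta> (v # b)"
    by (subst etas_append) auto
  moreover have "etas \<eta> ((a @ [u]) @ (r @ [v])) = etas \<eta> (a @ [u]) @ etas \<eta> (u # r @ [v])"
    by (subst etas_append) auto
  ultimately show ?thesis by simp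
qed

lemma etas_dec2: "etas \<eta> (r @ v # b) = etas \<eta> (r @ [v]) @ etas \<eta> (v # b)"
  using etas_append[of "r @ [v]" \<eta> b] by simp

lemma termA:
  shows "take (Suc (Suc (length a))) (\<alpha> # map \<beta> (a @ u # r @ v # b)) @ drop (length a + length r + 2) (\<alpha> # map \<beta> (a @ u # r @ v # b)) = \<alpha> # map \<beta> (a @ [u, v] @ b)"
    "take (Suc (length a + length r + 2 - Suc (length a))) (drop (Suc (length a)) (\<alpha> # map \<beta> (a @ u # r @ v # b))) = map \<beta> (u # r @ [v])"
    "take (length a + length r + 2 - Suc (length a)) (drop (Suc (length a)) (x # etas \<eta> (a @ u # r @ v # b))) = etas \<eta> (u # r @ [v])"
    "take (Suc (length a)) (x # etas \<eta> (a @ u # r @ v # b)) = x # etas \<eta> (a @ [u])"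
    "drop (length a + length r + 2) (x # etas \<eta> (a @ u # r @ v # b)) = etas \<eta> (v # b)"
proof -
  have e: "etas \<eta> (a @ u # r @ v # b) = etas \<eta> (a @ [u]) @ etas \<eta> (u # r @ [v]) @ etas \<eta> (v # b)"
    by (rule etas_dec3)
  have l1: "length (etas \<eta> (a @ [u])) = length a" and l2: "length (etas \<eta> (u # r @ [v])) = Suc (length r)"
    by simp_all
  show "take (Suc (Suc (length a))) (\<alpha> # map \<beta> (a @ u # r @ v # b)) @ drop (length a + length r + 2) (\<alpha> # map \<beta> (a @ u # r @ v # b)) = \<alpha> # map \<beta> (a @ [u, v] @ b)"
    by simp
  show "take (Suc (length a + length r + 2 - Suc (length a))) (drop (Suc (length a)) (\<alpha> # map \<beta> (a @ u # r @ v # b))) = map \<beta> (u # r @ [v])"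
    by simp
  show "take (length a + length r + 2 - Suc (length a)) (drop (Suc (length a)) (x # etas \<eta> (a @ u # r @ v # b))) = etas \<eta> (u # r @ [v])"
    unfolding e using l1 l2 by (simp del: etas_length)
  show "take (Suc (length a)) (x # etas \<eta> (a @ u # r @ v # b)) = x # etas \<eta> (a @ [u])"
    unfolding e using l1 l2 by (simp del: etas_length)
  show "drop (length a + length r + 2) (x # etas \<eta> (a @ u # r @ v # b)) = etas \<eta> (v # b)"
    unfolding e using l1 l2 by (simp del: etas_length)
qed

lemma termB:
  shows "take (Suc 0) (\<alpha> # map \<beta> (r @ v # b)) @ drop (Suc (length r)) (\<alpha> # map \<beta> (r @ v # b)) = \<alpha> # map \<beta> (v # b)"
    "take (Suc (Suc (length r))) (\<alpha> # map \<beta> (r @ v # b)) = \<alpha> # map \<beta> (r @ [v])"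
    "take (Suc (length r)) (x # etas \<eta> (r @ v # b)) = x # etas \<eta> (r @ [v])"
    "drop (Suc (length r)) (x # etas \<eta> (r @ v # b)) = etas \<eta> (v # b)"
proof -
  have e: "etas \<eta> (r @ v # b) = etas \<eta> (r @ [v]) @ etas \<eta> (v # b)" by (rule etas_dec2)
  have l1: "length (etas \<eta> (r @ [v])) = length r" by simp
  show "take (Suc 0) (\<alpha> # map \<beta> (r @ v # b)) @ drop (Suc (length r)) (\<alpha> # map \<beta> (r @ v # b)) = \<alpha> # map \<beta> (v # b)"
    by simp
  show "take (Suc (Suc (length r))) (\<alpha> # map \<beta> (r @ v # b)) = \<alpha> # map \<beta> (r @ [v])" by simp
  show "take (Suc (length r)) (x # etas \<eta> (r @ v # b)) = x # etas \<eta> (r @ [v])"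
    unfolding e using l1 by (simp del: etas_length)
  show "drop (Suc (length r)) (x # etas \<eta> (r @ v # b)) = etas \<eta> (v # b)"
    unfolding e using l1 by (simp del: etas_length)
qed

lemma sorted_hd_last: "sorted_wrt (<) (s::'a::order list) \<Longrightarrow> y \<in> set s \<Longrightarrow> hd s \<le> y \<and> y \<le> last s"
proof (induction s)
  case Nil thus ?case by simp
next
  case (Cons a s)
  show ?case
  proof (cases "s = []")
    case True thus ?thesis using Cons by simp
  next
    case False
    hence "last s \<in> set s" by simp
    thus ?thesis using Cons False by (auto intro: less_imp_le)
  qed
qed

lemma len2_split:
  assumes "2 \<le> length s" shows "\<exists>u r v. s = u # r @ [v]"
proof -
  obtain u t where s: "s = u # t" using assms by (cases s) auto
  hence "t \<noteq> []" using assms by auto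
  then obtain r v where "t = r @ [v]" by (cases t rule: rev_cases) auto
  thus ?thesis using s by auto
qed

lemma sorted_split:
  assumes "2 \<le> length s"
  shows "sorted_wrt (<) (a @ s @ (b::'a::order list)) \<longleftrightarrow> sorted_wrt (<) (a @ [hd s, last s] @ b) \<and> sorted_wrt (<) s"
proof -
  obtain u r v where s: "s = u # r @ [v]" using len2_split[OF assms] by blast
  show ?thesis
  proof
    assume H: "sorted_wrt (<) (a @ s @ b)"
    hence ss: "sorted_wrt (<) s" by (simp add: sorted_wrt_append)
    hence "u < v" using s by (simp add: sorted_wrt_append)
    thus "sorted_wrt (<) (a @ [hd s, last s] @ b) \<and> sorted_wrt (<) s"
      using H ss s by (auto simp: sorted_wrt_append)
  next
    assume H: "sorted_wrt (<) (a @ [hd s, last s] @ b) \<and> sorted_wrt (<) s"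
    hence ss: "sorted_wrt (<) s" by simp
    have hl: "\<And>y. y \<in> set s \<Longrightarrow> u \<le> y \<and> y \<le> v" using sorted_hd_last[OF ss] s by auto
    have A: "\<forall>x\<in>set a. \<forall>y\<in>set s. x < y"
      using H hl s by (auto simp: sorted_wrt_append intro: less_le_trans)
    have B: "\<forall>x\<in>set s. \<forall>y\<in>set b. x < y"
      using H hl s by (auto simp: sorted_wrt_append intro: le_less_trans)
    have C: "\<forall>x\<in>set a. \<forall>y\<in>set b. x < y"
      using H s by (auto simp: sorted_wrt_append)
    have sa: "sorted_wrt (<) a" and sb: "sorted_wrt (<) b" using H by (simp_all add: sorted_wrt_append)
    have sb2: "sorted_wrt (<) (s @ b)" unfolding sorted_wrt_append using ss sb B by (intro conjI)
    have ab: "\<forall>x\<in>set a. \<forall>y\<in>set (s @ b). x < y"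
    proof (intro ballI)
      fix x y assume "x \<in> set a" "y \<in> set (s @ b)"
      thus "x < y" using A C by auto
    qed
    show "sorted_wrt (<) (a @ s @ b)" unfolding sorted_wrt_append[of "(<)" a] using sa sb2 ab by (intro conjI)
  qed
qed

definition ainf_term where
  "ainf_term m os xs p q = m (take (Suc p) os @ drop q os)
        (take p xs @ [m (take (Suc (q - p)) (drop p os)) (take (q - p) (drop p xs))] @ drop q xs)"

lemma ainf_sum_term: "ainf_sum m os xs = (\<Sum>(p,q)\<in>{(p, q). p < q \<and> q \<le> length xs}. ainf_term m os xs p q)"
  unfolding ainf_sum_def ainf_term_def by simp

definition tA where
  "tA m \<alpha> \<beta> \<eta> x = (\<lambda>(a,s,b). m (\<alpha> # map \<beta> (a @ [hd s, last s] @ b))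
      (x # etas \<eta> (a @ [hd s]) @ [m (map \<beta> s) (etas \<eta> s)] @ etas \<eta> (last s # b)))"

definition tB where
  "tB m \<alpha> \<beta> \<eta> x = (\<lambda>(s,b). m (\<alpha> # map \<beta> (last s # b))
      (m (\<alpha> # map \<beta> s) (x # etas \<eta> s) # etas \<eta> (last s # b)))"

lemma termA_eq:
  assumes "cs = a @ s @ b" "2 \<le> length s"
  shows "ainf_term m (\<alpha> # map \<beta> cs) (x # etas \<eta> cs) (Suc (length a)) (length a + length s)
     = tA m \<alpha> \<beta> \<eta> x (a, s, b)"
proof -
  obtain u r v where s: "s = u # r @ [v]" using len2_split[OF assms(2)] by blast
  have q: "length a + length s = length a + length r + 2" using s by simp
  have cs': "cs = a @ u # r @ v # b" using assms(1) s by simp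
  have tA': "tA m \<alpha> \<beta> \<eta> x (a, s, b) = m (\<alpha> # map \<beta> (a @ [u, v] @ b))
      (x # etas \<eta> (a @ [u]) @ [m (map \<beta> (u # r @ [v])) (etas \<eta> (u # r @ [v]))] @ etas \<eta> (v # b))"
    unfolding tA_def s by simp
  show ?thesis unfolding ainf_term_def q tA' cs' by (simp only: termA append_Cons)
qed

lemma termB_eq:
  assumes "cs = s @ b" "s \<noteq> []"
  shows "ainf_term m (\<alpha> # map \<beta> cs) (x # etas \<eta> cs) 0 (length s) = tB m \<alpha> \<beta> \<eta> x (s, b)"
proof -
  obtain r v where s: "s = r @ [v]" using assms(2) by (cases s rule: rev_cases) auto
  have q: "length s = Suc (length r)" using s by simp
  have cs': "cs = r @ v # b" using assms(1) s by simp
  have tB': "tB m \<alpha> \<beta> \<eta> x (s, b) = m (\<alpha> # map \<beta> (v # b))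
      (m (\<alpha> # map \<beta> (r @ [v])) (x # etas \<eta> (r @ [v])) # etas \<eta> (v # b))"
    unfolding tB_def s by simp
  show ?thesis unfolding ainf_term_def q tB' cs' by (simp only: termB take_0 drop_0 diff_zero append_Nil append_Cons)
qed

definition DA :: "'i list \<Rightarrow> ('i list \<times> 'i list \<times> 'i list) set" where
  "DA cs = {(a,s,b). cs = a @ s @ b \<and> 2 \<le> length s}"
definition DB :: "'i list \<Rightarrow> ('i list \<times> 'i list) set" where
  "DB cs = {(s,b). cs = s @ b \<and> s \<noteq> []}"

lemma sumA:
  "(\<Sum>(p,q)\<in>{(p,q). (0::nat) < p \<and> p < q \<and> q \<le> length cs}. ainf_term m (\<alpha> # map \<beta> cs) (x # etas \<eta> cs) p q)
   = sum (tA m \<alpha> \<beta> \<eta> x) (DA cs)"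
proof (rule sum.reindex_bij_witness[where j = "\<lambda>(p,q). (take (p-1) cs, take (Suc (q-p)) (drop (p-1) cs), drop q cs)"
      and i = "\<lambda>(a,s,b). (Suc (length a), length a + length s)"])
  fix pq assume "pq \<in> {(p,q). (0::nat) < p \<and> p < q \<and> q \<le> length cs}"
  then obtain p q where pq: "pq = (p,q)" "0 < p" "p < q" "q \<le> length cs" by auto
  have e1: "(\<lambda>(a,s,b). (Suc (length a), length a + length s)) ((\<lambda>(p,q). (take (p-1) cs, take (Suc (q-p)) (drop (p-1) cs), drop q cs)) pq) = pq"
    using pq by auto
  thus "(\<lambda>(a,s,b). (Suc (length a), length a + length s)) ((\<lambda>(p,q). (take (p-1) cs, take (Suc (q-p)) (drop (p-1) cs), drop q cs)) pq) = pq" .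
  have cs: "cs = take (p-1) cs @ take (Suc (q-p)) (drop (p-1) cs) @ drop q cs"
  proof -
    have "drop (Suc (q-p)) (drop (p-1) cs) = drop q cs" using pq by simp
    thus ?thesis by (metis append_take_drop_id)
  qed
  show jin: "(\<lambda>(p,q). (take (p-1) cs, take (Suc (q-p)) (drop (p-1) cs), drop q cs)) pq \<in> DA cs"
  proof -
    have l2: "2 \<le> length (take (Suc (q-p)) (drop (p-1) cs))" using pq by simp
    show ?thesis unfolding pq(1) DA_def by (simp only: prod.case mem_Collect_eq) (rule conjI[OF cs l2])
  qed
  show "tA m \<alpha> \<beta> \<eta> x ((\<lambda>(p,q). (take (p-1) cs, take (Suc (q-p)) (drop (p-1) cs), drop q cs)) pq)
      = (\<lambda>(p,q). ainf_term m (\<alpha> # map \<beta> cs) (x # etas \<eta> cs) p q) pq"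
    using termA_eq[OF cs, of m \<alpha> \<beta> x \<eta>] pq e1 by auto
next
  fix asb assume "asb \<in> DA cs"
  then obtain a s b where asb: "asb = (a,s,b)" "cs = a @ s @ b" "2 \<le> length s" unfolding DA_def by auto
  show "(\<lambda>(p,q). (take (p-1) cs, take (Suc (q-p)) (drop (p-1) cs), drop q cs)) ((\<lambda>(a,s,b). (Suc (length a), length a + length s)) asb) = asb"
    using asb by simp
  show "(\<lambda>(a,s,b). (Suc (length a), length a + length s)) asb \<in> {(p,q). (0::nat) < p \<and> p < q \<and> q \<le> length cs}"
    using asb by simp
qed

lemma sumB:
  "(\<Sum>(p,q)\<in>{(p,q). p = (0::nat) \<and> 0 < q \<and> q \<le> length cs}. ainf_term m (\<alpha> # map \<beta> cs) (x # etas \<eta> cs) p q)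
   = sum (tB m \<alpha> \<beta> \<eta> x) (DB cs)"
proof (rule sum.reindex_bij_witness[where j = "\<lambda>(p,q). (take q cs, drop q cs)"
      and i = "\<lambda>(s,b). (0, length s)"])
  fix pq assume "pq \<in> {(p,q). p = (0::nat) \<and> 0 < q \<and> q \<le> length cs}"
  then obtain q where pq: "pq = (0,q)" "0 < q" "q \<le> length cs" by auto
  show e1: "(\<lambda>(s,b). (0, length s)) ((\<lambda>(p,q). (take q cs, drop q cs)) pq) = pq"
    using pq by auto
  show "(\<lambda>(p,q). (take q cs, drop q cs)) pq \<in> DB cs"
    using pq unfolding DB_def by auto
  have "take q cs \<noteq> []" using pq by auto
  thus "tB m \<alpha> \<beta> \<eta> x ((\<lambda>(p,q). (take q cs, drop q cs)) pq)
      = (\<lambda>(p,q). ainf_term m (\<alpha> # map \<beta> cs) (x # etas \<eta> cs) p q) pq"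
    using termB_eq[of cs "take q cs" "drop q cs" m \<alpha> \<beta> x \<eta>] pq by auto
next
  fix sb assume "sb \<in> DB cs"
  then obtain s b where sb: "sb = (s,b)" "cs = s @ b" "s \<noteq> []" unfolding DB_def by auto
  show "(\<lambda>(p,q). (take q cs, drop q cs)) ((\<lambda>(s,b). (0, length s)) sb) = sb"
    using sb by simp
  show "(\<lambda>(s,b). (0, length s)) sb \<in> {(p,q). p = (0::nat) \<and> 0 < q \<and> q \<le> length cs}"
    using sb by simp
qed

lemma decomp:
  assumes "cs \<noteq> []"
  shows "ainf_sum m (\<alpha> # map \<beta> cs) (x # etas \<eta> cs) = sum (tA m \<alpha> \<beta> \<eta> x) (DA cs) + sum (tB m \<alpha> \<beta> \<eta> x) (DB cs)"
proof -
  let ?g = "\<lambda>(p,q). ainf_term m (\<alpha> # map \<beta> cs) (x # etas \<eta> cs) p q"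
  let ?A = "{(p,q). (0::nat) < p \<and> p < q \<and> q \<le> length cs}"
  let ?B = "{(p,q). p = (0::nat) \<and> 0 < q \<and> q \<le> length cs}"
  have len: "length (x # etas \<eta> cs) = length cs" using assms by simp
  have U: "{(p, q). p < q \<and> q \<le> length (x # etas \<eta> cs)} = ?A \<union> ?B" unfolding len by auto
  have fA: "finite ?A" by (rule finite_subset[of _ "{..length cs} \<times> {..length cs}"]) auto
  have fB: "finite ?B" by (rule finite_subset[of _ "{..length cs} \<times> {..length cs}"]) auto
  have "ainf_sum m (\<alpha> # map \<beta> cs) (x # etas \<eta> cs) = sum ?g (?A \<union> ?B)"
    unfolding ainf_sum_term U by simp
  also have "\<dots> = sum ?g ?A + sum ?g ?B" by (rule sum.union_disjoint[OF fA fB]) auto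
  also have "\<dots> = sum (tA m \<alpha> \<beta> \<eta> x) (DA cs) + sum (tB m \<alpha> \<beta> \<eta> x) (DB cs)"
    by (simp only: sumA sumB)
  finally show ?thesis .
qed

lemma chains_len2: "i < j \<Longrightarrow> cs \<in> chains i j \<Longrightarrow> 2 \<le> length cs"
  unfolding chains_def
  by (cases cs; cases "tl cs") auto

lemma chains_length_le: "cs \<in> chains (i::'i::{order,finite}) j \<Longrightarrow> length cs \<le> card (UNIV::'i set)"
proof -
  assume "cs \<in> chains i j"
  hence "distinct cs" unfolding chains_def using sorted_lt_distinct by auto
  hence "length cs = card (set cs)" by (simp add: distinct_card)
  also have "\<dots> \<le> card (UNIV::'i set)" by (rule card_mono) auto
  finally show ?thesis .
qed

lemma hd_last_split:
  assumes "s \<noteq> []"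
  shows "hd (a @ s @ b) = hd (a @ [hd s, last s] @ b)" "last (a @ s @ b) = last (a @ [hd s, last s] @ b)"
  using assms by (cases a; cases b rule: rev_cases; simp)+

lemma finite_lists_le: "finite {xs::('i::finite) list. length xs \<le> n}"
  using finite_lists_length_le[of "UNIV::'i set" n] by simp

locale P3 =
  fixes gens :: "'o \<Rightarrow> 'o \<Rightarrow> 'g set"
    and adm :: "'o list \<Rightarrow> bool"
    and m :: "'o list \<Rightarrow> ('g \<Rightarrow> bit) list \<Rightarrow> ('g \<Rightarrow> bit)"
    and \<beta> :: "'i::{order,finite} \<Rightarrow> 'o"
    and \<eta> :: "'i \<Rightarrow> 'i \<Rightarrow> ('g \<Rightarrow> bit)"
    and \<alpha> :: 'o
  assumes pm: "polygon_maps gens adm m"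
    and fc: "filtered_circles gens adm m \<beta> \<eta>"
    and a3: "\<forall>cs. cs \<noteq> [] \<longrightarrow> sorted_wrt (<) cs \<longrightarrow> adm (\<alpha> # map \<beta> cs)"
begin

lemma m_CF: "adm os \<Longrightarrow> composable gens os xs \<Longrightarrow> m os xs \<in> CF gens (hd os) (last os)"
  using pm unfolding polygon_maps_def by blast

lemma inner_alpha:
  assumes "cs \<noteq> []" "sorted_wrt (<) cs" "x \<in> CF gens \<alpha> (\<beta> (hd cs))"
  shows "m (\<alpha> # map \<beta> cs) (x # etas \<eta> cs) \<in> CF gens \<alpha> (\<beta> (last cs))"
  using m_CF[OF _ comp_alpha[OF fc assms]] a3 assms by (simp add: last_map)

lemma inner_beta:
  assumes "2 \<le> length cs" "sorted_wrt (<) cs"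
  shows "m (map \<beta> cs) (etas \<eta> cs) \<in> CF gens (\<beta> (hd cs)) (\<beta> (last cs))"
proof -
  have "cs \<noteq> []" using assms by auto
  moreover have "adm (map \<beta> cs)" using fc assms unfolding filtered_circles_def by blast
  ultimately show ?thesis using m_CF[OF _ comp_beta[OF fc assms]] by (simp add: last_map hd_map)
qed

lemma D_CF:
  assumes "i < j" "x \<in> CF gens \<alpha> (\<beta> i)"
  shows "Dmap m \<alpha> \<beta> \<eta> i j x \<in> CF gens \<alpha> (\<beta> j)"
  unfolding Dmap_def
  by (rule CF_sum) (use assms inner_alpha in \<open>auto simp: chains_def\<close>)

lemma D_add:
  assumes "i < j" "x \<in> CF gens \<alpha> (\<beta> i)" "y \<in> CF gens \<alpha> (\<beta> i)"
  shows "Dmap m \<alpha> \<beta> \<eta> i j (x + y) = Dmap m \<alpha> \<beta> \<eta> i j x + Dmap m \<alpha> \<beta> \<eta> i j y"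
  unfolding Dmap_def sum.distrib[symmetric]
proof (rule sum.cong[OF refl])
  fix cs assume cs: "cs \<in> chains i j"
  hence ne: "cs \<noteq> []" and so: "sorted_wrt (<) cs" and h: "hd cs = i" unfolding chains_def by auto
  have co: "composable gens (\<alpha> # map \<beta> cs) (x # etas \<eta> cs)" using comp_alpha[OF fc ne so] assms h by simp
  have "m (\<alpha> # map \<beta> cs) ((x # etas \<eta> cs)[0 := x + y]) =
        m (\<alpha> # map \<beta> cs) ((x # etas \<eta> cs)[0 := x]) + m (\<alpha> # map \<beta> cs) ((x # etas \<eta> cs)[0 := y])"
    using pm_lin[OF pm _ co, of 0 x y] a3 ne so assms h by (simp add: hd_conv_nth)
  thus "m (\<alpha> # map \<beta> cs) ((x + y) # etas \<eta> cs) =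
        m (\<alpha> # map \<beta> cs) (x # etas \<eta> cs) + m (\<alpha> # map \<beta> cs) (y # etas \<eta> cs)" by simp
qed

lemma part1:
  assumes "x \<in> CF gens \<alpha> (\<beta> i)"
  shows "m [\<alpha>, \<beta> i] [m [\<alpha>, \<beta> i] [x]] = 0"
proof -
  have "adm [\<alpha>, \<beta> i]" using a3[rule_format, of "[i]"] by simp
  moreover have "composable gens [\<alpha>, \<beta> i] [x]" using assms by (simp add: composable_def)
  ultimately have "ainf_sum m [\<alpha>, \<beta> i] [x] = 0" using pm unfolding polygon_maps_def by blast
  moreover have "{(p, q). p < q \<and> q \<le> Suc 0} = {(0::nat, 1::nat)}" by auto
  ultimately show ?thesis unfolding ainf_sum_def by simp
qed

end

context P3 begin

lemma lin0:
  assumes "adm os" "composable gens os xs" "k < length xs"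
  shows "m os (xs[k := 0]) = 0"
  using pm_lin_sum[OF pm assms, of "{}" "\<lambda>_. 0"] by simp

lemma finite_DA: "finite (DA (cs::'i list))"
proof (rule finite_subset)
  show "DA cs \<subseteq> {xs. length xs \<le> length cs} \<times> {xs::'i list. length xs \<le> length cs} \<times> {xs::'i list. length xs \<le> length cs}"
    unfolding DA_def by auto
  show "finite ({xs::'i list. length xs \<le> length cs} \<times> {xs::'i list. length xs \<le> length cs} \<times> {xs::'i list. length xs \<le> length cs})"
    by (intro finite_cartesian_product finite_lists_le finite_UNIV)
qed

lemma finite_DB: "finite (DB (cs::'i list))"
proof (rule finite_subset)
  show "DB cs \<subseteq> {xs. length xs \<le> length cs} \<times> {xs::'i list. length xs \<le> length cs}"
    unfolding DB_def by auto
  show "finite ({xs::'i list. length xs \<le> length cs} \<times> {xs::'i list. length xs \<le> length cs})"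
    by (intro finite_cartesian_product finite_lists_le finite_UNIV)
qed

context
  fixes i k :: 'i and x
  assumes ik: "i < k" and xi: "x \<in> CF gens \<alpha> (\<beta> i)"
begin

lemma inner_zero:
  assumes c: "a @ [u, v] @ b \<in> chains i k"
  shows "(\<Sum>s\<in>chains u v. tA m \<alpha> \<beta> \<eta> x (a, s, b)) = 0"
proof -
  define c' where "c' = a @ [u, v] @ b"
  have ne: "c' \<noteq> []" and so: "sorted_wrt (<) c'" and hd: "hd c' = i"
    using c unfolding c'_def chains_def by auto
  have uv: "u < v" using so unfolding c'_def by (simp add: sorted_wrt_append)
  define os where "os = \<alpha> # map \<beta> c'"
  define xs0 where "xs0 = x # etas \<eta> c'"
  define kk where "kk = Suc (length a)"
  define f where "f = (\<lambda>s. m (map \<beta> s) (etas \<eta> s))"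
  have ad: "adm os" using a3 ne so unfolding os_def by blast
  have co: "composable gens os xs0" using comp_alpha[OF fc ne so] xi hd unfolding os_def xs0_def by simp
  have kl: "kk < length xs0" unfolding kk_def xs0_def c'_def by simp
  have ec: "etas \<eta> c' = etas \<eta> (a @ [u]) @ [\<eta> u v] @ etas \<eta> (v # b)"
    using etas_dec3[of \<eta> a u "[]" v b] unfolding c'_def by simp
  have la: "length (etas \<eta> (a @ [u])) = length a" by simp
  have eq: "tA m \<alpha> \<beta> \<eta> x (a, s, b) = m os (xs0[kk := f s])" if s: "s \<in> chains u v" for s
  proof -
    have "hd s = u" "last s = v" using s unfolding chains_def by auto
    moreover have "xs0[kk := f s] = x # etas \<eta> (a @ [u]) @ [f s] @ etas \<eta> (v # b)"
      unfolding xs0_def kk_def ec using la by (simp add: list_update_append)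
    ultimately show ?thesis unfolding tA_def os_def c'_def f_def by simp
  qed
  have fCF: "\<forall>s\<in>chains u v. f s \<in> CF gens (os ! kk) (os ! Suc kk)"
  proof
    fix s assume s: "s \<in> chains u v"
    hence "2 \<le> length s" "sorted_wrt (<) s" "hd s = u" "last s = v"
      using chains_len2[OF uv] unfolding chains_def by auto
    moreover have "os ! kk = \<beta> u" "os ! Suc kk = \<beta> v"
      unfolding os_def kk_def c'_def by (simp_all add: nth_append)
    ultimately show "f s \<in> CF gens (os ! kk) (os ! Suc kk)" unfolding f_def using inner_beta[of s] by simp
  qed
  have "(\<Sum>s\<in>chains u v. tA m \<alpha> \<beta> \<eta> x (a, s, b)) = (\<Sum>s\<in>chains u v. m os (xs0[kk := f s]))"
    using eq by (rule sum.cong[OF refl])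
  also have "\<dots> = m os (xs0[kk := sum f (chains u v)])"
    by (rule pm_lin_sum[OF pm ad co kl fCF finite_chains, symmetric])
  also have "sum f (chains u v) = 0" using fc uv unfolding filtered_circles_def f_def by blast
  also have "m os (xs0[kk := 0]) = 0" by (rule lin0[OF ad co kl])
  finally show ?thesis .
qed

lemma SA_zero: "(\<Sum>cs\<in>chains i k. sum (tA m \<alpha> \<beta> \<eta> x) (DA cs)) = 0"
proof -
  let ?F = "{(a,u,v,b). a @ [u,v] @ b \<in> chains i k}"
  let ?B = "\<lambda>(a,u,v,b). chains u v"
  let ?g = "\<lambda>(a,u,v,b) s. tA m \<alpha> \<beta> \<eta> x (a, s, b)"
  have finF: "finite ?F"
  proof (rule finite_subset)
    show "?F \<subseteq> {xs. length xs \<le> card (UNIV::'i set)} \<times> UNIV \<times> UNIV \<times> {xs::'i list. length xs \<le> card (UNIV::'i set)}"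
      using chains_length_le by fastforce
    show "finite ({xs::'i list. length xs \<le> card (UNIV::'i set)} \<times> (UNIV::'i set) \<times> (UNIV::'i set) \<times> {xs::'i list. length xs \<le> card (UNIV::'i set)})"
      by (intro finite_cartesian_product finite_lists_le finite_UNIV)
  qed
  have "(\<Sum>cs\<in>chains i k. sum (tA m \<alpha> \<beta> \<eta> x) (DA cs)) = sum (\<lambda>(cs, asb). tA m \<alpha> \<beta> \<eta> x asb) (SIGMA cs:chains i k. DA cs)"
    by (rule sum.Sigma) (auto simp: finite_chains finite_DA)
  also have "\<dots> = sum (case_prod ?g) (SIGMA y:?F. ?B y)"
  proof (rule sum.reindex_bij_witness[where j = "\<lambda>(cs, (a, s, b)). ((a, hd s, last s, b), s)"
        and i = "\<lambda>((a, u, v, b), s). (a @ s @ b, (a, s, b))"])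
    fix z assume "z \<in> (SIGMA cs:chains i k. DA cs)"
    then obtain cs a s b where z: "z = (cs, (a, s, b))" "cs \<in> chains i k" "cs = a @ s @ b" "2 \<le> length s"
      unfolding DA_def by auto
    have sne: "s \<noteq> []" using z by auto
    have so: "sorted_wrt (<) (a @ [hd s, last s] @ b)" "sorted_wrt (<) s"
      using z sorted_split[OF z(4), of a b] unfolding chains_def by auto
    have c1: "a @ [hd s, last s] @ b \<in> chains i k"
      using z so hd_last_split[OF sne, of a b] unfolding chains_def by auto
    have c2: "s \<in> chains (hd s) (last s)" using so sne unfolding chains_def by auto
    show "(\<lambda>((a, u, v, b), s). (a @ s @ b, (a, s, b))) ((\<lambda>(cs, (a, s, b)). ((a, hd s, last s, b), s)) z) = z"
      using z by simp
    show "(\<lambda>(cs, (a, s, b)). ((a, hd s, last s, b), s)) z \<in> (SIGMA y:?F. ?B y)"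
      using z c1 c2 by simp
    show "case_prod ?g ((\<lambda>(cs, (a, s, b)). ((a, hd s, last s, b), s)) z) = (\<lambda>(cs, asb). tA m \<alpha> \<beta> \<eta> x asb) z"
      using z by simp
  next
    fix z assume "z \<in> (SIGMA y:?F. ?B y)"
    then obtain a u v b s where z: "z = ((a, u, v, b), s)" "a @ [u, v] @ b \<in> chains i k" "s \<in> chains u v"
      by auto
    have uv: "u < v" using z unfolding chains_def by (auto simp: sorted_wrt_append)
    have l2: "2 \<le> length s" using chains_len2[OF uv z(3)] .
    have sne: "s \<noteq> []" using l2 by auto
    have hs: "hd s = u" "last s = v" "sorted_wrt (<) s" using z unfolding chains_def by auto
    have "sorted_wrt (<) (a @ s @ b)" using sorted_split[OF l2, of a b] z hs unfolding chains_def by auto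
    hence c1: "a @ s @ b \<in> chains i k"
      using z hs hd_last_split[OF sne, of a b] unfolding chains_def by auto
    show "(\<lambda>(cs, (a, s, b)). ((a, hd s, last s, b), s)) ((\<lambda>((a, u, v, b), s). (a @ s @ b, (a, s, b))) z) = z"
      using z hs by simp
    show "(\<lambda>((a, u, v, b), s). (a @ s @ b, (a, s, b))) z \<in> (SIGMA cs:chains i k. DA cs)"
      using z c1 l2 unfolding DA_def by simp
  qed
  also have "\<dots> = (\<Sum>y\<in>?F. sum (?g y) (?B y))"
    by (rule sum.Sigma[symmetric, OF finF]) (auto simp: finite_chains)
  also have "\<dots> = (\<Sum>y\<in>?F. 0)"
  proof (rule sum.cong[OF refl])
    fix y assume "y \<in> ?F"
    then obtain a u v b where y: "y = (a, u, v, b)" "a @ [u, v] @ b \<in> chains i k" by auto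
    show "sum (?g y) (?B y) = 0" using inner_zero[OF y(2)] y(1) by simp
  qed
  finally show ?thesis by simp
qed

end
end

context P3 begin

context
  fixes i k :: 'i and x
  assumes ik: "i < k" and xi: "x \<in> CF gens \<alpha> (\<beta> i)"
begin

abbreviation "inner s \<equiv> m (\<alpha> # map \<beta> s) (x # etas \<eta> s)"

lemma G1_sum: "(\<Sum>s\<in>chains i k. tB m \<alpha> \<beta> \<eta> x (s, [])) = m [\<alpha>, \<beta> k] [Dmap m \<alpha> \<beta> \<eta> i k x]"
proof -
  let ?os = "[\<alpha>, \<beta> k]" and ?xs = "[Dmap m \<alpha> \<beta> \<eta> i k x]"
  have ad: "adm ?os" using a3[rule_format, of "[k]"] by simp
  have co: "composable gens ?os ?xs" using D_CF[OF ik xi] by (simp add: composable_def)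
  have fCF: "\<forall>s\<in>chains i k. inner s \<in> CF gens (?os ! 0) (?os ! Suc 0)"
    using inner_alpha xi unfolding chains_def by auto
  have "(\<Sum>s\<in>chains i k. tB m \<alpha> \<beta> \<eta> x (s, [])) = (\<Sum>s\<in>chains i k. m ?os (?xs[0 := inner s]))"
    by (rule sum.cong[OF refl]) (auto simp: tB_def chains_def)
  also have "\<dots> = m ?os (?xs[0 := sum inner (chains i k)])"
    by (rule pm_lin_sum[OF pm ad co _ fCF finite_chains, symmetric]) simp
  also have "\<dots> = m ?os ?xs" by (simp add: Dmap_def)
  finally show ?thesis .
qed

lemma G2_sum: "sum (tB m \<alpha> \<beta> \<eta> x) {(s,b). s = [i] \<and> b \<noteq> [] \<and> i # b \<in> chains i k}
   = Dmap m \<alpha> \<beta> \<eta> i k (m [\<alpha>, \<beta> i] [x])"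
  unfolding Dmap_def
proof (rule sum.reindex_bij_witness[where j = "\<lambda>(s,b). i # b" and i = "\<lambda>cs. ([i], tl cs)"])
  fix z assume "z \<in> {(s,b). s = [i] \<and> b \<noteq> [] \<and> i # b \<in> chains i k}"
  then obtain b where z: "z = ([i], b)" "b \<noteq> []" "i # b \<in> chains i k" by auto
  show "(\<lambda>cs. ([i], tl cs)) ((\<lambda>(s,b). i # b) z) = z" using z by simp
  show "(\<lambda>(s,b). i # b) z \<in> chains i k" using z by simp
  show "m (\<alpha> # map \<beta> ((\<lambda>(s,b). i # b) z)) (m [\<alpha>, \<beta> i] [x] # etas \<eta> ((\<lambda>(s,b). i # b) z)) =
        tB m \<alpha> \<beta> \<eta> x z" using z by (simp add: tB_def)
next
  fix cs assume cs: "cs \<in> chains i k"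
  hence l2: "2 \<le> length cs" using chains_len2[OF ik] by blast
  have e: "cs = i # tl cs" using cs unfolding chains_def by (cases cs) auto
  show "(\<lambda>(s,b). i # b) ((\<lambda>cs. ([i], tl cs)) cs) = cs" using e by simp
  have "tl cs \<noteq> []" using l2 by (cases cs) auto
  thus "(\<lambda>cs. ([i], tl cs)) cs \<in> {(s,b). s = [i] \<and> b \<noteq> [] \<and> i # b \<in> chains i k}"
    using cs e by simp
qed

end
end

context P3 begin

context
  fixes i k :: 'i and x
  assumes ik: "i < k" and xi: "x \<in> CF gens \<alpha> (\<beta> i)"
begin

lemma inner_c:
  assumes j: "i < j" and c: "c \<in> chains j k"
  shows "(\<Sum>s\<in>chains i j. m (\<alpha> # map \<beta> c) (inner x s # etas \<eta> c))
       = m (\<alpha> # map \<beta> c) (Dmap m \<alpha> \<beta> \<eta> i j x # etas \<eta> c)"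
proof -
  let ?os = "\<alpha> # map \<beta> c" and ?xs = "Dmap m \<alpha> \<beta> \<eta> i j x # etas \<eta> c"
  have ne: "c \<noteq> []" and so: "sorted_wrt (<) c" and hc: "hd c = j" using c unfolding chains_def by auto
  have ad: "adm ?os" using a3 ne so by blast
  have co: "composable gens ?os ?xs" using comp_alpha[OF fc ne so] D_CF[OF j xi] hc by simp
  have o1: "?os ! Suc 0 = \<beta> j" using ne hc by (simp add: hd_conv_nth)
  have fCF: "\<forall>s\<in>chains i j. inner x s \<in> CF gens (?os ! 0) (?os ! Suc 0)"
  proof
    fix s assume s: "s \<in> chains i j"
    hence "s \<noteq> []" "sorted_wrt (<) s" "hd s = i" "last s = j" unfolding chains_def by auto
    thus "inner x s \<in> CF gens (?os ! 0) (?os ! Suc 0)" using inner_alpha[of s x] xi o1 by simp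
  qed
  have "(\<Sum>s\<in>chains i j. m ?os (inner x s # etas \<eta> c)) = (\<Sum>s\<in>chains i j. m ?os (?xs[0 := inner x s]))"
    by simp
  also have "\<dots> = m ?os (?xs[0 := sum (inner x) (chains i j)])"
    by (rule pm_lin_sum[OF pm ad co _ fCF finite_chains, symmetric]) simp
  also have "\<dots> = m ?os ?xs" by (simp add: Dmap_def)
  finally show ?thesis .
qed

lemma G3_sum:
  "sum (tB m \<alpha> \<beta> \<eta> x) {(s,b). s @ b \<in> chains i k \<and> 2 \<le> length s \<and> b \<noteq> []}
   = (\<Sum>j\<in>{j. i < j \<and> j < k}. Dmap m \<alpha> \<beta> \<eta> j k (Dmap m \<alpha> \<beta> \<eta> i j x))"
proof -
  let ?J = "{j. i < j \<and> j < k}"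
  have "sum (tB m \<alpha> \<beta> \<eta> x) {(s,b). s @ b \<in> chains i k \<and> 2 \<le> length s \<and> b \<noteq> []}
      = sum (\<lambda>(j, (c, s)). m (\<alpha> # map \<beta> c) (inner x s # etas \<eta> c)) (SIGMA j:?J. chains j k \<times> chains i j)"
  proof (rule sum.reindex_bij_witness[where j = "\<lambda>(s, b). (last s, (last s # b, s))"
        and i = "\<lambda>(j, (c, s)). (s, tl c)"])
    fix z assume "z \<in> {(s,b). s @ b \<in> chains i k \<and> 2 \<le> length s \<and> b \<noteq> []}"
    then obtain s b where z: "z = (s, b)" "s @ b \<in> chains i k" "2 \<le> length s" "b \<noteq> []" by auto
    have sne: "s \<noteq> []" using z by auto
    have so: "sorted_wrt (<) (s @ b)" and h: "hd (s @ b) = i" and l: "last (s @ b) = k"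
      using z unfolding chains_def by auto
    have ss: "sorted_wrt (<) s" and sb: "sorted_wrt (<) b" and sx: "\<forall>y\<in>set s. \<forall>w\<in>set b. y < w"
      using so by (simp_all add: sorted_wrt_append)
    have ls: "last s \<in> set s" using sne by simp
    have hs: "hd s = i" using h sne by simp
    have lb: "last b = k" using l z by simp
    have "s ! 0 < s ! (length s - 1)" using sorted_wrt_nth_less[OF ss, of 0 "length s - 1"] z(3) by simp
    hence ij: "i < last s" using hs sne by (simp add: hd_conv_nth last_conv_nth)
    have "last s < last b" using sx ls z(4) by simp
    hence jk: "last s < k" using lb by simp
    have c1: "last s # b \<in> chains (last s) k" using sb sx ls lb z(4) unfolding chains_def by auto
    have c2: "s \<in> chains i (last s)" using sne ss hs unfolding chains_def by auto
    show "(\<lambda>(j, (c, s)). (s, tl c)) ((\<lambda>(s, b). (last s, (last s # b, s))) z) = z" using z by simp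
    show "(\<lambda>(s, b). (last s, (last s # b, s))) z \<in> (SIGMA j:?J. chains j k \<times> chains i j)"
      using z ij jk c1 c2 by simp
    show "(\<lambda>(j, (c, s)). m (\<alpha> # map \<beta> c) (inner x s # etas \<eta> c)) ((\<lambda>(s, b). (last s, (last s # b, s))) z)
        = tB m \<alpha> \<beta> \<eta> x z" using z by (simp add: tB_def)
  next
    fix z assume "z \<in> (SIGMA j:?J. chains j k \<times> chains i j)"
    then obtain j c s where z: "z = (j, (c, s))" "i < j" "j < k" "c \<in> chains j k" "s \<in> chains i j" by auto
    have c2: "2 \<le> length c" using chains_len2[OF z(3) z(4)] .
    have s2: "2 \<le> length s" using chains_len2[OF z(2) z(5)] .
    have ce: "c = j # tl c" using z(4) unfolding chains_def by (cases c) auto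
    have tne: "tl c \<noteq> []" using c2 by (cases c) auto
    have sc: "sorted_wrt (<) c" and lc: "last c = k" using z(4) unfolding chains_def by auto
    have ss: "sorted_wrt (<) s" and hs: "hd s = i" and ls: "last s = j" and sne: "s \<noteq> []"
      using z(5) unfolding chains_def by auto
    have stl: "sorted_wrt (<) (tl c)" and jt: "\<forall>w\<in>set (tl c). j < w"
      using sc ce by (metis sorted_wrt.simps(2))+
    have "\<forall>y\<in>set s. \<forall>w\<in>set (tl c). y < w"
    proof (intro ballI)
      fix y w assume "y \<in> set s" "w \<in> set (tl c)"
      hence "y \<le> j" "j < w" using sorted_hd_last[OF ss] ls jt by auto
      thus "y < w" by (rule le_less_trans)
    qed
    hence "sorted_wrt (<) (s @ tl c)" using ss stl by (simp add: sorted_wrt_append)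
    moreover have "last (s @ tl c) = k" using tne lc ce by (metis last_ConsR last_append)
    ultimately have c1: "s @ tl c \<in> chains i k" using sne hs unfolding chains_def by simp
    show "(\<lambda>(s, b). (last s, (last s # b, s))) ((\<lambda>(j, (c, s)). (s, tl c)) z) = z"
      using z ls ce by simp
    show "(\<lambda>(j, (c, s)). (s, tl c)) z \<in> {(s,b). s @ b \<in> chains i k \<and> 2 \<le> length s \<and> b \<noteq> []}"
      using z c1 s2 tne by simp
  qed
  also have "\<dots> = (\<Sum>j\<in>?J. sum (\<lambda>(c, s). m (\<alpha> # map \<beta> c) (inner x s # etas \<eta> c)) (chains j k \<times> chains i j))"
    by (rule sum.Sigma[symmetric]) (auto simp: finite_chains)
  also have "\<dots> = (\<Sum>j\<in>?J. Dmap m \<alpha> \<beta> \<eta> j k (Dmap m \<alpha> \<beta> \<eta> i j x))"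
  proof (rule sum.cong[OF refl])
    fix j assume j: "j \<in> ?J"
    have "sum (\<lambda>(c, s). m (\<alpha> # map \<beta> c) (inner x s # etas \<eta> c)) (chains j k \<times> chains i j)
        = (\<Sum>c\<in>chains j k. \<Sum>s\<in>chains i j. m (\<alpha> # map \<beta> c) (inner x s # etas \<eta> c))"
      by (rule sum.cartesian_product[symmetric])
    also have "\<dots> = (\<Sum>c\<in>chains j k. m (\<alpha> # map \<beta> c) (Dmap m \<alpha> \<beta> \<eta> i j x # etas \<eta> c))"
      using inner_c j by (intro sum.cong[OF refl]) auto
    finally show "sum (\<lambda>(c, s). m (\<alpha> # map \<beta> c) (inner x s # etas \<eta> c)) (chains j k \<times> chains i j)
        = Dmap m \<alpha> \<beta> \<eta> j k (Dmap m \<alpha> \<beta> \<eta> i j x)" by (simp add: Dmap_def)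
  qed
  finally show ?thesis .
qed

end
end

context P3 begin

context
  fixes i k :: 'i and x
  assumes ik: "i < k" and xi: "x \<in> CF gens \<alpha> (\<beta> i)"
begin

lemma part4:
  "m [\<alpha>, \<beta> k] [Dmap m \<alpha> \<beta> \<eta> i k x] + Dmap m \<alpha> \<beta> \<eta> i k (m [\<alpha>, \<beta> i] [x])
     = (\<Sum>j \<in> {j. i < j \<and> j < k}. Dmap m \<alpha> \<beta> \<eta> j k (Dmap m \<alpha> \<beta> \<eta> i j x))"
proof -
  let ?C = "chains i k"
  let ?tA = "tA m \<alpha> \<beta> \<eta> x" and ?tB = "tB m \<alpha> \<beta> \<eta> x"
  let ?G = "{(s,b). s @ b \<in> ?C \<and> s \<noteq> []}"
  let ?G1 = "{(s,b). s \<in> ?C \<and> b = ([]::'i list)}"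
  let ?G2 = "{(s,b). s = [i] \<and> b \<noteq> [] \<and> i # b \<in> ?C}"
  let ?G3 = "{(s,b). s @ b \<in> ?C \<and> 2 \<le> length s \<and> b \<noteq> []}"
  let ?M1 = "m [\<alpha>, \<beta> k] [Dmap m \<alpha> \<beta> \<eta> i k x]"
  let ?M2 = "Dmap m \<alpha> \<beta> \<eta> i k (m [\<alpha>, \<beta> i] [x])"
  let ?M3 = "(\<Sum>j \<in> {j. i < j \<and> j < k}. Dmap m \<alpha> \<beta> \<eta> j k (Dmap m \<alpha> \<beta> \<eta> i j x))"
  have Z: "(\<Sum>cs\<in>?C. ainf_sum m (\<alpha> # map \<beta> cs) (x # etas \<eta> cs)) = 0"
  proof (rule sum.neutral, rule ballI)
    fix cs assume cs: "cs \<in> ?C"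
    hence ne: "cs \<noteq> []" and so: "sorted_wrt (<) cs" and h: "hd cs = i" unfolding chains_def by auto
    have "adm (\<alpha> # map \<beta> cs)" using a3 ne so by blast
    moreover have "composable gens (\<alpha> # map \<beta> cs) (x # etas \<eta> cs)" using comp_alpha[OF fc ne so] xi h by simp
    ultimately show "ainf_sum m (\<alpha> # map \<beta> cs) (x # etas \<eta> cs) = 0"
      using pm unfolding polygon_maps_def by blast
  qed
  have D: "(\<Sum>cs\<in>?C. ainf_sum m (\<alpha> # map \<beta> cs) (x # etas \<eta> cs))
      = (\<Sum>cs\<in>?C. sum ?tA (DA cs)) + (\<Sum>cs\<in>?C. sum ?tB (DB cs))"
    unfolding sum.distrib[symmetric]
    by (rule sum.cong[OF refl]) (rule decomp, auto simp: chains_def)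
  have finG: "finite ?G"
  proof (rule finite_subset)
    show "?G \<subseteq> {xs::'i list. length xs \<le> card (UNIV::'i set)} \<times> {xs::'i list. length xs \<le> card (UNIV::'i set)}"
    proof
      fix z assume "z \<in> ?G"
      then obtain s b where z: "z = (s, b)" "s @ b \<in> ?C" by auto
      have "length (s @ b) \<le> card (UNIV::'i set)" using chains_length_le[OF z(2)] .
      thus "z \<in> {xs::'i list. length xs \<le> card (UNIV::'i set)} \<times> {xs::'i list. length xs \<le> card (UNIV::'i set)}"
        using z(1) by simp
    qed
    show "finite ({xs::'i list. length xs \<le> card (UNIV::'i set)} \<times> {xs::'i list. length xs \<le> card (UNIV::'i set)})"
      by (intro finite_cartesian_product finite_lists_le)
  qed
  have B1: "(\<Sum>cs\<in>?C. sum ?tB (DB cs)) = sum (\<lambda>(cs, sb). ?tB sb) (SIGMA cs:?C. DB cs)"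
    by (rule sum.Sigma) (auto simp: finite_chains finite_DB)
  also have "\<dots> = sum ?tB ?G"
  proof (rule sum.reindex_bij_witness[where j = snd and i = "\<lambda>(s, b). (s @ b, (s, b))"])
    fix z assume "z \<in> (SIGMA cs:?C. DB cs)"
    then obtain cs s b where z: "z = (cs, (s, b))" "cs \<in> ?C" "cs = s @ b" "s \<noteq> []" unfolding DB_def by auto
    show "(\<lambda>(s, b). (s @ b, (s, b))) (snd z) = z" using z by simp
    show "snd z \<in> ?G" using z by simp
    show "?tB (snd z) = (\<lambda>(cs, sb). ?tB sb) z" using z by simp
  next
    fix z assume "z \<in> ?G"
    then obtain s b where z: "z = (s, b)" "s @ b \<in> ?C" "s \<noteq> []" by auto
    show "snd ((\<lambda>(s, b). (s @ b, (s, b))) z) = z" using z by simp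
    show "(\<lambda>(s, b). (s @ b, (s, b))) z \<in> (SIGMA cs:?C. DB cs)" using z unfolding DB_def by simp
  qed
  also have "?G = ?G1 \<union> (?G2 \<union> ?G3)"
  proof (intro equalityI subsetI)
    fix z assume "z \<in> ?G"
    then obtain s b where z: "z = (s, b)" "s @ b \<in> ?C" "s \<noteq> []" by auto
    show "z \<in> ?G1 \<union> (?G2 \<union> ?G3)"
    proof (cases "b = []")
      case True thus ?thesis using z by simp
    next
      case False
      show ?thesis
      proof (cases "2 \<le> length s")
        case True thus ?thesis using z False by simp
      next
        case nl: False
        then obtain u where s: "s = [u]" using z(3) nl by (cases s; cases "tl s") auto
        have "u = i" using z(2) s unfolding chains_def by simp
        thus ?thesis using z s False by simp
      qed
    qed
  next
    fix z assume "z \<in> ?G1 \<union> (?G2 \<union> ?G3)"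
    thus "z \<in> ?G" unfolding chains_def by auto
  qed
  also have "sum ?tB (?G1 \<union> (?G2 \<union> ?G3)) = sum ?tB ?G1 + (sum ?tB ?G2 + sum ?tB ?G3)"
  proof -
    have s1: "?G1 \<subseteq> ?G"
    proof
      fix z assume "z \<in> ?G1"
      then obtain s where z: "z = (s, [])" "s \<in> ?C" by auto
      hence "s \<noteq> []" unfolding chains_def by simp
      thus "z \<in> ?G" using z by simp
    qed
    have s2: "?G2 \<subseteq> ?G" by auto
    have s3: "?G3 \<subseteq> ?G"
    proof
      fix z assume "z \<in> ?G3"
      then obtain s b where z: "z = (s, b)" "s @ b \<in> ?C" "2 \<le> length s" by auto
      hence "s \<noteq> []" by auto
      thus "z \<in> ?G" using z by simp
    qed
    have fin: "finite ?G1" "finite ?G2" "finite ?G3"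
      using finite_subset[OF s1 finG] finite_subset[OF s2 finG] finite_subset[OF s3 finG] by simp_all
    have "sum ?tB (?G1 \<union> (?G2 \<union> ?G3)) = sum ?tB ?G1 + sum ?tB (?G2 \<union> ?G3)"
      by (rule sum.union_disjoint) (use fin in auto)
    also have "sum ?tB (?G2 \<union> ?G3) = sum ?tB ?G2 + sum ?tB ?G3"
      by (rule sum.union_disjoint) (use fin in auto)
    finally show ?thesis .
  qed
  also have "sum ?tB ?G1 = ?M1"
  proof -
    have "sum ?tB ?G1 = (\<Sum>s\<in>?C. ?tB (s, []))"
      by (rule sum.reindex_bij_witness[where j = fst and i = "\<lambda>s. (s, [])"]) auto
    thus ?thesis using G1_sum[OF ik xi] by simp
  qed
  also have "sum ?tB ?G2 = ?M2" by (rule G2_sum[OF ik xi])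
  also have "sum ?tB ?G3 = ?M3" by (rule G3_sum[OF ik xi])
  finally have SB: "(\<Sum>cs\<in>?C. sum ?tB (DB cs)) = ?M1 + (?M2 + ?M3)" .
  have "0 = ?M1 + (?M2 + ?M3)" using Z D SB SA_zero[OF ik xi] by simp
  hence "?M3 = ?M3 + (?M1 + (?M2 + ?M3))" by simp
  also have "\<dots> = ?M1 + ?M2 + (?M3 + ?M3)" by (simp add: algebra_simps)
  also have "\<dots> = ?M1 + ?M2" by (simp add: fun_self)
  finally show ?thesis by simp
qed

end
end

theorem proposition3:
  fixes gens :: "'o \<Rightarrow> 'o \<Rightarrow> 'g set"
    and adm :: "'o list \<Rightarrow> bool"
    and m :: "'o list \<Rightarrow> ('g \<Rightarrow> bit) list \<Rightarrow> ('g \<Rightarrow> bit)"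
    and \<beta> :: "'i::{order,finite} \<Rightarrow> 'o"
    and \<eta> :: "'i \<Rightarrow> 'i \<Rightarrow> ('g \<Rightarrow> bit)"
    and \<alpha> :: 'o
  assumes "polygon_maps gens adm m"
    and "filtered_circles gens adm m \<beta> \<eta>"
    and "\<forall>cs. cs \<noteq> [] \<longrightarrow> sorted_wrt (<) cs \<longrightarrow> adm (\<alpha> # map \<beta> cs)"
  shows "(\<forall>i x. x \<in> CF gens \<alpha> (\<beta> i) \<longrightarrow> m [\<alpha>, \<beta> i] [m [\<alpha>, \<beta> i] [x]] = 0)
    \<and> (\<forall>i j x. i < j \<longrightarrow> x \<in> CF gens \<alpha> (\<beta> i) \<longrightarrow> Dmap m \<alpha> \<beta> \<eta> i j x \<in> CF gens \<alpha> (\<beta> j))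
    \<and> (\<forall>i j x y. i < j \<longrightarrow> x \<in> CF gens \<alpha> (\<beta> i) \<longrightarrow> y \<in> CF gens \<alpha> (\<beta> i) \<longrightarrow>
         Dmap m \<alpha> \<beta> \<eta> i j (x + y) = Dmap m \<alpha> \<beta> \<eta> i j x + Dmap m \<alpha> \<beta> \<eta> i j y)
    \<and> (\<forall>i k x. i < k \<longrightarrow> x \<in> CF gens \<alpha> (\<beta> i) \<longrightarrow>
         m [\<alpha>, \<beta> k] [Dmap m \<alpha> \<beta> \<eta> i k x] + Dmap m \<alpha> \<beta> \<eta> i k (m [\<alpha>, \<beta> i] [x])
           = (\<Sum>j \<in> {j. i < j \<and> j < k}. Dmap m \<alpha> \<beta> \<eta> j k (Dmap m \<alpha> \<beta> \<eta> i j x)))"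
proof -
  interpret P3 gens adm m \<beta> \<eta> \<alpha> by (rule P3.intro) (fact assms)+
  show ?thesis using part1 D_CF D_add part4 by blast
qed


end
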